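(* Let $c\ge1$ and let $\Gamma$ be a $c$-uniform unoriented hypergraph with $N$ vertices, $M\ge1$ edges and no isolated vertices, with average degree $\overline{\deg}$, smallest edge Laplacian eigenvalue $\mu_1<c/\overline{\deg}$, and strong edge coloring number $\chi'$, and suppose $\chi'=\dfrac{c-\mu_1}{c/\overline{\deg}-\mu_1}$. (1) If $\mu_1=0$, then $\Gamma$ is $k$-regular for some $k$ (namely $k=\overline{\deg}$), $\chi'=k$, and $0$ is an eigenvalue of $L^1$ with multiplicity at least $k-1$. (2) If $\mu_1>0$, then $\mu_1$ is an eigenvalue of $L^1$ with multiplicity at least $\chi'-1$, and also an eigenvalue of the normalized Laplacian $L$ with multiplicity at least $\chi'-1$.
   Context: A hypergraph has finite vertex set $V$ and edge set $E\subseteq\mathcal P(V)$; it is $c$-uniform if $|e|=c$ for all $e$, and unoriented means all incidences have orientation $+1$, so the incidence matrix $\mathcal I$ ($N\times M$) has $\mathcal I_{v,e}=1$ if $v\in e$ and $0$ otherwise. $\deg v=|\{e: v\in e\}|\ge1$, $D=\mathrm{diag}(\deg v)$, $\overline{\deg}=\frac1N\sum_v\deg v$; $\Gamma$ is $k$-regular if every vertex has degree $k$. The normalized Laplacian is $L=D^{-1}\mathcal I\mathcal I^\top$ ($N\times N$) and the edge Laplacian is $L^1=\mathcal I^\top D^{-1}\mathcal I$ ($M\times M$), with eigenvalues $0\le\mu_1\le\dots\le\mu_M$. A proper strong $k$-edge-coloring is a map $c'\colon E\to\{1,\dots,k\}$ such that distinct edges of the same color are disjoint; $\chi'$ is the least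 such $k$. *)

theory Defs
  imports Complex_Main "HOL-Library.Function_Algebras"
begin

text \<open>Hypergraphs: a finite vertex set V and an edge set E, a set of subsets of V.
  Matrices indexed by a finite set S are functions S => S => real; vectors are
  functions S => real vanishing outside S.\<close>

definition hypergraph :: "'v set \<Rightarrow> 'v set set \<Rightarrow> bool" where
  "hypergraph V E \<longleftrightarrow> finite V \<and> E \<subseteq> Pow V"

definition uniform :: "nat \<Rightarrow> 'v set set \<Rightarrow> bool" where
  "uniform c E \<longleftrightarrow> (\<forall>e\<in>E. card e = c)"

definition incidence :: "'v \<Rightarrow> 'v set \<Rightarrow> real" where
  "incidence v e = (if v \<in> e then 1 else 0)"

definition hdeg :: "'v set set \<Rightarrow> 'v \<Rightarrow> nat" where
  "hdeg E v = card {e \<in> E. v \<in> e}"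

definition avg_deg :: "'v set \<Rightarrow> 'v set set \<Rightarrow> real" where
  "avg_deg V E = (\<Sum>v\<in>V. real (hdeg E v)) / real (card V)"

definition regular :: "'v set \<Rightarrow> 'v set set \<Rightarrow> nat \<Rightarrow> bool" where
  "regular V E k \<longleftrightarrow> (\<forall>v\<in>V. hdeg E v = k)"

text \<open>Normalized Laplacian L = D^{-1} I I^T (N x N).\<close>
definition norm_laplacian :: "'v set \<Rightarrow> 'v set set \<Rightarrow> 'v \<Rightarrow> 'v \<Rightarrow> real" where
  "norm_laplacian V E v w =
     (\<Sum>e\<in>E. incidence v e * incidence w e) / real (hdeg E v)"

text \<open>Edge Laplacian L^1 = I^T D^{-1} I (M x M).\<close>
definition edge_laplacian :: "'v set \<Rightarrow> 'v set set \<Rightarrow> 'v set \<Rightarrow> 'v set \<Rightarrow> real" where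
  "edge_laplacian V E e f =
     (\<Sum>v\<in>V. incidence v e * incidence v f / real (hdeg E v))"

definition eigenspace :: "'a set \<Rightarrow> ('a \<Rightarrow> 'a \<Rightarrow> real) \<Rightarrow> real \<Rightarrow> ('a \<Rightarrow> real) set" where
  "eigenspace S A mu =
     {x. (\<forall>i. i \<notin> S \<longrightarrow> x i = 0) \<and> (\<forall>i\<in>S. (\<Sum>j\<in>S. A i j * x j) = mu * x i)}"

definition is_eigenvalue :: "'a set \<Rightarrow> ('a \<Rightarrow> 'a \<Rightarrow> real) \<Rightarrow> real \<Rightarrow> bool" where
  "is_eigenvalue S A mu \<longleftrightarrow> (\<exists>x\<in>eigenspace S A mu. x \<noteq> (\<lambda>_. 0))"

text \<open>Multiplicity = dimension of the eigenspace (geometric multiplicity; the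
  matrices considered are diagonalizable, so this equals the algebraic one).\<close>
definition eig_mult :: "'a set \<Rightarrow> ('a \<Rightarrow> 'a \<Rightarrow> real) \<Rightarrow> real \<Rightarrow> nat" where
  "eig_mult S A mu = vector_space.dim (\<lambda>r (x::'a \<Rightarrow> real) i. r * x i) (eigenspace S A mu)"

definition mu1 :: "'v set \<Rightarrow> 'v set set \<Rightarrow> real" where
  "mu1 V E = Min {mu. is_eigenvalue E (edge_laplacian V E) mu}"

definition proper_strong_coloring :: "'v set set \<Rightarrow> nat \<Rightarrow> ('v set \<Rightarrow> nat) \<Rightarrow> bool" where
  "proper_strong_coloring E k col \<longleftrightarrow>
     (\<forall>e\<in>E. col e \<in> {1..k}) \<and>
     (\<forall>e\<in>E. \<forall>f\<in>E. e \<noteq> f \<and> col e = col f \<longrightarrow> e \<inter> f = {})"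

definition strong_chromatic_index :: "'v set set \<Rightarrow> nat" where
  "strong_chromatic_index E = (LEAST k. \<exists>col. proper_strong_coloring E k col)"

end

theory Submission
  imports Defs "HOL-Analysis.Analysis"
begin

interpretation fv: vector_space "\<lambda>r (x::'a\<Rightarrow>real) i. r * x i"
  by unfold_locales (auto simp: fun_eq_iff algebra_simps)

lemma sum_fun_app: "(sum f t) i = (\<Sum>v\<in>t. f v i)"
  by (induction t rule: infinite_finite_induct) auto

definition supp_in :: "'a set \<Rightarrow> ('a \<Rightarrow> real) \<Rightarrow> bool" where
  "supp_in S x \<longleftrightarrow> (\<forall>i. i \<notin> S \<longrightarrow> x i = 0)"
definition qf :: "'a set \<Rightarrow> ('a \<Rightarrow> 'a \<Rightarrow> real) \<Rightarrow> ('a \<Rightarrow> real) \<Rightarrow> ('a \<Rightarrow> real) \<Rightarrow> real" where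
  "qf S A x y = (\<Sum>i\<in>S. \<Sum>j\<in>S. x i * A i j * y j)"
definition nrm :: "'a set \<Rightarrow> ('a \<Rightarrow> real) \<Rightarrow> real" where
  "nrm S x = (\<Sum>i\<in>S. (x i)^2)"
definition symm :: "'a set \<Rightarrow> ('a \<Rightarrow> 'a \<Rightarrow> real) \<Rightarrow> bool" where
  "symm S A \<longleftrightarrow> (\<forall>i\<in>S. \<forall>j\<in>S. A i j = A j i)"

lemma qf_sym: assumes "symm S A" shows "qf S A x y = qf S A y x"
proof -
  have "qf S A x y = (\<Sum>j\<in>S. \<Sum>i\<in>S. x i * A i j * y j)"
    unfolding qf_def by (rule sum.swap)
  also have "\<dots> = qf S A y x" unfolding qf_def
    using assms unfolding symm_def by (intro sum.cong refl) (auto simp: mult.commute mult.left_commute)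
  finally show ?thesis .
qed

lemma qf_expand: "qf S B (\<lambda>i. x i + t * z i) (\<lambda>i. x i + t * z i)
   = qf S B x x + t * qf S B x z + t * qf S B z x + t^2 * qf S B z z"
  by (simp add: qf_def algebra_simps sum.distrib sum_distrib_left power2_eq_square)

lemma qf_scale: "qf S A (\<lambda>i. r * y i) (\<lambda>i. r * y i) = r^2 * qf S A y y"
  by (simp add: qf_def sum_distrib_left algebra_simps power2_eq_square)

lemma nrm_scale: "nrm S (\<lambda>i. r * y i) = r^2 * nrm S y"
  by (simp add: nrm_def sum_distrib_left algebra_simps power2_eq_square)

lemma qf_shift: assumes "finite S"
  shows "qf S (\<lambda>i j. A i j - (if i = j then \<mu> else 0)) x x = qf S A x x - \<mu> * nrm S x"
proof -
  have "qf S (\<lambda>i j. A i j - (if i = j then \<mu> else 0)) x x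
     = (\<Sum>i\<in>S. (\<Sum>j\<in>S. x i * A i j * x j) - (\<Sum>j\<in>S. if i = j then x i * \<mu> * x j else 0))"
    unfolding qf_def by (intro sum.cong refl) (auto simp: algebra_simps sum_subtractf[symmetric] intro!: sum.cong)
  also have "\<dots> = (\<Sum>i\<in>S. (\<Sum>j\<in>S. x i * A i j * x j) - x i * \<mu> * x i)"
    using assms by (intro sum.cong refl) (simp add: sum.delta)
  also have "\<dots> = qf S A x x - \<mu> * nrm S x"
    by (simp add: qf_def nrm_def sum_subtractf sum_distrib_left power2_eq_square algebra_simps)
  finally show ?thesis .
qed

lemma nrm_nonneg: "0 \<le> nrm S x" unfolding nrm_def by (simp add: sum_nonneg)

lemma nrm_zero: assumes "finite S" "nrm S x = 0" "i \<in> S" shows "x i = 0"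
  using assms unfolding nrm_def by (simp add: sum_nonneg_eq_0_iff)

lemma quad_aux:
  fixes a c :: real
  assumes c: "0 \<le> c" and h: "\<And>t. 0 \<le> 2 * t * a + t^2 * c"
  shows "a = 0"
proof (rule ccontr)
  assume a: "a \<noteq> 0"
  define t where "t = - a / (c + 1)"
  have c1: "c + 1 > 0" using c by simp
  have "t^2 * c \<le> t^2 * (c + 1)" by (simp add: mult_left_mono)
  also have "\<dots> = a^2 / (c+1)^2 * (c+1)" by (simp add: t_def power_divide)
  also have "\<dots> = a^2 / (c+1)" using c1 by (simp add: power2_eq_square)
  finally have 1: "t^2 * c \<le> a^2 / (c+1)" .
  have 2: "2 * t * a = - 2 * (a^2 / (c+1))" by (simp add: t_def power2_eq_square field_simps)
  have "a^2 / (c+1) > 0" using a c1 by simp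
  with 1 2 h[of t] show False by linarith
qed

lemma psd_eig:
  assumes fin: "finite S" and sym: "symm S A"
    and psd: "\<forall>y. supp_in S y \<longrightarrow> \<mu> * nrm S y \<le> qf S A y y"
    and sx: "supp_in S x" and eq: "qf S A x x = \<mu> * nrm S x"
  shows "x \<in> eigenspace S A \<mu>"
proof -
  define B where "B i j = A i j - (if i = j then \<mu> else 0)" for i j
  have symB: "symm S B" using sym unfolding symm_def B_def by auto
  have psdB: "0 \<le> qf S B y y" if "supp_in S y" for y
    using psd that qf_shift[OF fin, of A \<mu> y] unfolding B_def by auto
  have B0: "qf S B x x = 0" using eq qf_shift[OF fin, of A \<mu> x] unfolding B_def by simp
  define z where "z i = (if i \<in> S then \<Sum>j\<in>S. B i j * x j else 0)" for i
  have sz: "supp_in S z" unfolding supp_in_def z_def by simp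
  have zx: "qf S B z x = nrm S z"
    unfolding qf_def nrm_def
    by (intro sum.cong refl) (simp add: z_def power2_eq_square sum_distrib_left mult.assoc)
  have cz: "0 \<le> qf S B z z" using psdB sz by simp
  have "0 \<le> 2 * t * nrm S z + t^2 * qf S B z z" for t
  proof -
    have "supp_in S (\<lambda>i. x i + t * z i)" using sx sz unfolding supp_in_def by simp
    then have "0 \<le> qf S B (\<lambda>i. x i + t * z i) (\<lambda>i. x i + t * z i)" by (rule psdB)
    also have "\<dots> = 2 * t * nrm S z + t^2 * qf S B z z"
      unfolding qf_expand B0 qf_sym[OF symB, of x z] zx by simp
    finally show ?thesis .
  qed
  then have "nrm S z = 0" using quad_aux[OF cz] by blast
  then have z0: "z i = 0" if "i \<in> S" for i using nrm_zero[OF fin] that by blast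
  show ?thesis unfolding eigenspace_def
  proof (intro CollectI conjI allI impI ballI)
    fix i assume "i \<notin> S" then show "x i = 0" using sx unfolding supp_in_def by simp
  next
    fix i assume i: "i \<in> S"
    have "z i = (\<Sum>j\<in>S. A i j * x j - (if i = j then \<mu> * x j else 0))"
      using i unfolding z_def B_def by (auto intro!: sum.cong simp: algebra_simps)
    then have "0 = (\<Sum>j\<in>S. A i j * x j - (if i = j then \<mu> * x j else 0))"
      using z0[OF i] by simp
    also have "\<dots> = (\<Sum>j\<in>S. A i j * x j) - \<mu> * x i"
      using fin i by (simp add: sum_subtractf sum.delta)
    finally show "(\<Sum>j\<in>S. A i j * x j) = \<mu> * x i" by simp
  qed
qed

lemma qf_eig: assumes "x \<in> eigenspace S A \<mu>" shows "qf S A x x = \<mu> * nrm S x"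
proof -
  have "qf S A x x = (\<Sum>i\<in>S. x i * (\<Sum>j\<in>S. A i j * x j))"
    unfolding qf_def by (simp add: sum_distrib_left mult.assoc)
  also have "\<dots> = (\<Sum>i\<in>S. x i * (\<mu> * x i))"
    using assms unfolding eigenspace_def by (intro sum.cong refl) auto
  also have "\<dots> = \<mu> * nrm S x" unfolding nrm_def by (simp add: sum_distrib_left power2_eq_square algebra_simps)
  finally show ?thesis .
qed

lemma eig_supp: "x \<in> eigenspace S A \<mu> \<Longrightarrow> supp_in S x"
  unfolding eigenspace_def supp_in_def by auto

lemma nrm_pos: assumes "finite S" "supp_in S x" "x \<noteq> (\<lambda>_. 0)" shows "0 < nrm S x"
proof -
  obtain i where "x i \<noteq> 0" using assms(3) by auto
  then have "i \<in> S" using assms(2) unfolding supp_in_def by auto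
  have "nrm S x \<noteq> 0" using nrm_zero[OF assms(1) _ \<open>i \<in> S\<close>] \<open>x i \<noteq> 0\<close> by blast
  then show ?thesis using nrm_nonneg[of S x] by linarith
qed

lemma cont_coord_sum: "continuous_on UNIV (\<lambda>x::'a\<Rightarrow>real. nrm S x)"
  unfolding nrm_def by (intro continuous_intros continuous_on_product_coordinates)

lemma cont_qf: "continuous_on UNIV (\<lambda>x::'a\<Rightarrow>real. qf S A x x)"
  unfolding qf_def by (intro continuous_intros continuous_on_product_coordinates)

lemma rayleigh:
  assumes fin: "finite S" and ne: "S \<noteq> {}" and sym: "symm S A"
  shows "\<exists>lam x. x \<in> eigenspace S A lam \<and> x \<noteq> (\<lambda>_. 0)
            \<and> (\<forall>y. supp_in S y \<longrightarrow> lam * nrm S y \<le> qf S A y y)"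
proof -
  define K :: "('a \<Rightarrow> real) set" where "K = PiE UNIV (\<lambda>i. if i \<in> S then {-1..1::real} else {0})"
  have "compactin (product_topology (\<lambda>i. euclidean) UNIV) K"
    unfolding K_def compactin_PiE by auto
  then have cK: "compact K" by (simp add: euclidean_product_topology)
  define X where "X = K \<inter> {x. nrm S x = 1}"
  have "closed {x::'a\<Rightarrow>real. nrm S x = 1}"
    by (rule closed_Collect_eq[OF cont_coord_sum]) simp
  then have cX: "compact X" unfolding X_def using cK by (rule compact_Int_closed[rotated])
  obtain i0 where i0: "i0 \<in> S" using ne by auto
  define d where "d = (\<lambda>i. if i = i0 then 1 else (0::real))"
  have "d \<in> K" unfolding K_def d_def using i0 by auto
  moreover have "nrm S d = 1" unfolding nrm_def d_def using fin i0
    by (simp add: if_distrib[of "\<lambda>x. x^2"] sum.delta cong: if_cong)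
  ultimately have "X \<noteq> {}" unfolding X_def by auto
  then obtain x0 where x0: "x0 \<in> X" and mn: "\<forall>y\<in>X. qf S A x0 x0 \<le> qf S A y y"
    using continuous_attains_inf[OF cX _ continuous_on_subset[OF cont_qf]] by blast
  define lam where "lam = qf S A x0 x0"
  have sx0: "supp_in S x0" unfolding supp_in_def
  proof (intro allI impI)
    fix i assume "i \<notin> S"
    have "x0 \<in> K" using x0 unfolding X_def by auto
    then have "x0 i \<in> (if i \<in> S then {-1..1::real} else {0})" unfolding K_def
      by (rule PiE_mem) simp
    then show "x0 i = 0" using \<open>i \<notin> S\<close> by simp
  qed
  have n0: "nrm S x0 = 1" using x0 unfolding X_def by auto
  have ray: "\<forall>y. supp_in S y \<longrightarrow> lam * nrm S y \<le> qf S A y y"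
  proof (intro allI impI)
    fix y assume sy: "supp_in S y"
    show "lam * nrm S y \<le> qf S A y y"
    proof (cases "nrm S y = 0")
      case True
      then have "y i = 0" if "i \<in> S" for i using nrm_zero[OF fin] that by blast
      then have "qf S A y y = 0" unfolding qf_def by simp
      then show ?thesis using True by simp
    next
      case False
      then have np: "nrm S y > 0" using nrm_nonneg[of S y] by linarith
      define s where "s = sqrt (nrm S y)"
      have s0: "s > 0" using np unfolding s_def by simp
      have ss: "s^2 = nrm S y" unfolding s_def using np by simp
      define y' where "y' = (\<lambda>i. (1/s) * y i)"
      have "y' \<in> K" unfolding K_def PiE_def
      proof (auto simp: extensional_def)
        fix i assume "i \<in> S"
        have "(y i)^2 \<le> nrm S y" unfolding nrm_def using fin \<open>i \<in> S\<close>
          by (intro member_le_sum) auto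
        then have "\<bar>y i\<bar> \<le> s" unfolding s_def by (simp add: real_le_rsqrt)
        then show "-1 \<le> y' i" "y' i \<le> 1" unfolding y'_def using s0
          by (auto simp: field_simps abs_le_iff)
      next
        fix i assume "i \<notin> S" then show "y' i = 0" using sy unfolding y'_def supp_in_def by simp
      qed
      moreover have "nrm S y' = 1" unfolding y'_def nrm_scale using ss s0 np
        by (simp add: power_divide)
      ultimately have "y' \<in> X" unfolding X_def by simp
      then have "lam \<le> qf S A y' y'" using mn unfolding lam_def by blast
      also have "\<dots> = qf S A y y / nrm S y" unfolding y'_def qf_scale using ss
        by (simp add: power_divide)
      finally show ?thesis using np by (simp add: field_simps)
    qed
  qed
  have "x0 \<in> eigenspace S A lam"
    using psd_eig[OF fin sym ray sx0] n0 unfolding lam_def by simp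
  moreover have "x0 \<noteq> (\<lambda>_. 0)" using n0 unfolding nrm_def by auto
  ultimately show ?thesis using ray by blast
qed

definition delta :: "'a \<Rightarrow> 'a \<Rightarrow> real" where "delta i = (\<lambda>j. if j = i then 1 else 0)"

lemma supp_span: assumes "finite S" "supp_in S x" shows "x \<in> fv.span (delta ` S)"
proof -
  have "x = (\<Sum>i\<in>S. (\<lambda>j. x i * delta i j))"
  proof (rule ext)
    fix j
    show "x j = (\<Sum>i\<in>S. (\<lambda>j. x i * delta i j)) j"
      using assms unfolding sum_fun_app delta_def supp_in_def
      by (cases "j \<in> S") (simp_all add: if_distrib[of "\<lambda>z. x _ * z"] sum.delta' cong: if_cong)
  qed
  also have "\<dots> \<in> fv.span (delta ` S)"
    by (intro fv.span_sum fv.span_scale fv.span_base) auto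
  finally show ?thesis .
qed

lemma fun_sum_zero: "(\<Sum>w\<in>t. f w) = (0::'a \<Rightarrow> real) \<Longrightarrow> (\<Sum>w\<in>t. f w i) = 0"
  by (metis sum_fun_app zero_fun_def)

lemma orth_indep:
  assumes fin: "finite S" and nz: "\<forall>v\<in>T. supp_in S v \<and> v \<noteq> (\<lambda>_. 0)"
    and orth: "\<forall>v\<in>T. \<forall>w\<in>T. v \<noteq> w \<longrightarrow> (\<Sum>i\<in>S. v i * w i) = 0"
  shows "fv.independent T"
proof
  assume "fv.dependent T"
  then obtain t u v where t: "finite t" "t \<subseteq> T" and s0: "(\<Sum>w\<in>t. (\<lambda>i. u w * w i)) = 0"
    and v: "v \<in> t" "u v \<noteq> 0"
    unfolding fv.dependent_explicit by blast
  have si: "(\<Sum>w\<in>t. u w * w i) = 0" for i using fun_sum_zero[OF s0] .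
  have "0 = (\<Sum>i\<in>S. v i * (\<Sum>w\<in>t. u w * w i))" using si by simp
  also have "\<dots> = (\<Sum>w\<in>t. u w * (\<Sum>i\<in>S. v i * w i))"
    by (simp add: sum_distrib_left sum.swap[of _ S] algebra_simps)
  also have "\<dots> = (\<Sum>w\<in>t. if w = v then u v * nrm S v else 0)"
  proof (intro sum.cong refl)
    fix w assume "w \<in> t"
    show "u w * (\<Sum>i\<in>S. v i * w i) = (if w = v then u v * nrm S v else 0)"
    proof (cases "w = v")
      case True then show ?thesis unfolding nrm_def by (simp add: power2_eq_square)
    next
      case False
      have "v \<in> T" "w \<in> T" using t v \<open>w \<in> t\<close> by auto
      moreover have "v \<noteq> w" using False by simp
      ultimately have "(\<Sum>i\<in>S. v i * w i) = 0" using orth by simp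
      then show ?thesis using False by simp
    qed
  qed
  also have "\<dots> = u v * nrm S v" using t v by (simp add: sum.delta')
  finally have "u v * nrm S v = 0" by simp
  moreover have "nrm S v > 0" using nrm_pos[OF fin] nz v t by blast
  ultimately show False using v by simp
qed

lemma eig_orth:
  assumes sym: "symm S A" and x: "x \<in> eigenspace S A \<mu>" and y: "y \<in> eigenspace S A \<nu>" and ne: "\<mu> \<noteq> \<nu>"
  shows "(\<Sum>i\<in>S. x i * y i) = 0"
proof -
  have 1: "qf S A x y = \<nu> * (\<Sum>i\<in>S. x i * y i)"
  proof -
    have "qf S A x y = (\<Sum>i\<in>S. x i * (\<Sum>j\<in>S. A i j * y j))"
      unfolding qf_def by (simp add: sum_distrib_left mult.assoc)
    also have "\<dots> = (\<Sum>i\<in>S. x i * (\<nu> * y i))"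
      using y unfolding eigenspace_def by (intro sum.cong refl) auto
    finally show ?thesis by (simp add: sum_distrib_left algebra_simps)
  qed
  have 2: "qf S A y x = \<mu> * (\<Sum>i\<in>S. x i * y i)"
  proof -
    have "qf S A y x = (\<Sum>i\<in>S. y i * (\<Sum>j\<in>S. A i j * x j))"
      unfolding qf_def by (simp add: sum_distrib_left mult.assoc)
    also have "\<dots> = (\<Sum>i\<in>S. y i * (\<mu> * x i))"
      using x unfolding eigenspace_def by (intro sum.cong refl) auto
    finally show ?thesis by (simp add: sum_distrib_left algebra_simps)
  qed
  from 1 2 qf_sym[OF sym, of x y] have "(\<mu> - \<nu>) * (\<Sum>i\<in>S. x i * y i) = 0"
    by (simp add: algebra_simps)
  then show ?thesis using ne by simp
qed

lemma indep_bound: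
  assumes "finite S" "fv.independent T" "\<forall>v\<in>T. supp_in S v"
  shows "finite T \<and> card T \<le> card S"
proof -
  have "T \<subseteq> fv.span (delta ` S)" using supp_span assms(1,3) by blast
  then have "finite T \<and> card T \<le> card (delta ` S)"
    using fv.independent_span_bound[OF finite_imageI[OF assms(1)] assms(2)] by blast
  then show ?thesis using card_image_le[OF assms(1), of delta] by linarith
qed

lemma eig_finite:
  assumes fin: "finite S" and sym: "symm S A"
  shows "finite {\<mu>. is_eigenvalue S A \<mu>}"
proof (rule ccontr)
  assume inf: "infinite {\<mu>. is_eigenvalue S A \<mu>}"
  obtain F where F0: "finite F" "card F = Suc (card S)" "F \<subseteq> {\<mu>. is_eigenvalue S A \<mu>}"
    using infinite_arbitrarily_large[OF inf, of "Suc (card S)"] by (elim exE conjE) 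
  note F = F0(3) F0(1) F0(2)
  define ev where "ev \<mu> = (SOME x. x \<in> eigenspace S A \<mu> \<and> x \<noteq> (\<lambda>_. 0))" for \<mu>
  have ev: "ev \<mu> \<in> eigenspace S A \<mu> \<and> ev \<mu> \<noteq> (\<lambda>_. 0)" if "\<mu> \<in> F" for \<mu>
  proof -
    have "is_eigenvalue S A \<mu>" using F(1) that by blast
    then have "\<exists>x. x \<in> eigenspace S A \<mu> \<and> x \<noteq> (\<lambda>_. 0)" unfolding is_eigenvalue_def by blast
    then show ?thesis unfolding ev_def by (rule someI_ex)
  qed
  have orth: "(\<Sum>i\<in>S. ev \<mu> i * ev \<nu> i) = 0" if "\<mu> \<in> F" "\<nu> \<in> F" "\<mu> \<noteq> \<nu>" for \<mu> \<nu>
  proof -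
    have "ev \<mu> \<in> eigenspace S A \<mu>" "ev \<nu> \<in> eigenspace S A \<nu>" using ev that(1,2) by blast+
    then show ?thesis using eig_orth[OF sym _ _ that(3)] by blast
  qed
  have inj: "inj_on ev F"
  proof (rule inj_onI, rule ccontr)
    fix \<mu> \<nu> assume a: "\<mu> \<in> F" "\<nu> \<in> F" "ev \<mu> = ev \<nu>" "\<mu> \<noteq> \<nu>"
    have "(\<Sum>i\<in>S. ev \<mu> i * ev \<nu> i) = 0" using orth[OF a(1,2,4)] .
    then have "nrm S (ev \<mu>) = 0" using a(3) unfolding nrm_def by (simp add: power2_eq_square)
    moreover have "supp_in S (ev \<mu>)" "ev \<mu> \<noteq> (\<lambda>_. 0)" using ev[OF a(1)] eig_supp by blast+
    then have "nrm S (ev \<mu>) > 0" using nrm_pos[OF fin] by blast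
    ultimately show False by simp
  qed
  have nzT: "\<forall>v\<in>ev ` F. supp_in S v \<and> v \<noteq> (\<lambda>_. 0)"
  proof
    fix v assume "v \<in> ev ` F"
    then obtain \<mu> where m: "\<mu> \<in> F" "v = ev \<mu>" by (rule imageE) simp
    show "supp_in S v \<and> v \<noteq> (\<lambda>_. 0)" using ev[OF m(1)] eig_supp unfolding m(2) by blast
  qed
  have orT: "\<forall>v\<in>ev ` F. \<forall>w\<in>ev ` F. v \<noteq> w \<longrightarrow> (\<Sum>i\<in>S. v i * w i) = 0"
  proof (intro ballI impI)
    fix v w assume "v \<in> ev ` F" "w \<in> ev ` F" "v \<noteq> w"
    obtain \<mu> where m: "\<mu> \<in> F" "v = ev \<mu>" using \<open>v \<in> ev ` F\<close> by (rule imageE) simp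
    obtain \<nu> where n: "\<nu> \<in> F" "w = ev \<nu>" using \<open>w \<in> ev ` F\<close> by (rule imageE) simp
    have "\<mu> \<noteq> \<nu>" using m n \<open>v \<noteq> w\<close> by auto
    then show "(\<Sum>i\<in>S. v i * w i) = 0" using orth[OF m(1) n(1)] m n by simp
  qed
  have "fv.independent (ev ` F)" using orth_indep[OF fin nzT orT] .
  then have "card (ev ` F) \<le> card S" using indep_bound[OF fin] nzT by blast
  moreover have "card (ev ` F) = Suc (card S)" using card_image[OF inj] F by simp
  ultimately show False by simp
qed

lemma dim_lower:
  assumes fin: "finite S" and Y: "Y \<subseteq> eigenspace S A \<mu>" and ind: "fv.independent Y"
  shows "card Y \<le> eig_mult S A \<mu>"
proof -
  obtain B where B: "B \<subseteq> eigenspace S A \<mu>" "fv.independent B" "eigenspace S A \<mu> \<subseteq> fv.span B"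
    "card B = fv.dim (eigenspace S A \<mu>)"
    using fv.basis_exists by blast
  have "finite B" using indep_bound[OF fin B(2)] B(1) eig_supp by blast
  have "Y \<subseteq> fv.span B" using Y B(3) by blast
  then have "card Y \<le> card B" using fv.independent_span_bound[OF \<open>finite B\<close> ind] by blast
  then show ?thesis unfolding eig_mult_def using B(4) by simp
qed

lemma indep_tri:
  assumes fin: "finite I" and tri: "\<forall>i\<in>I. \<forall>j\<in>I. y i (p j) = (if i = j then 1 else (0::real))"
  shows "fv.independent (y ` I) \<and> card (y ` I) = card I"
proof
  have inj: "inj_on y I"
  proof (rule inj_onI)
    fix i j assume "i \<in> I" "j \<in> I" "y i = y j"
    then have "y i (p i) = y j (p i)" by simp
    then show "i = j" using tri \<open>i \<in> I\<close> \<open>j \<in> I\<close> by (auto split: if_splits)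
  qed
  then show "card (y ` I) = card I" by (rule card_image)
  show "fv.independent (y ` I)"
  proof
    assume "fv.dependent (y ` I)"
    then obtain t u v where t: "finite t" "t \<subseteq> y ` I" and s0: "(\<Sum>w\<in>t. (\<lambda>i. u w * w i)) = 0"
      and v: "v \<in> t" "u v \<noteq> 0"
      unfolding fv.dependent_explicit by blast
    obtain j where j: "j \<in> I" "v = y j" using t v by blast
    have "0 = (\<Sum>w\<in>t. u w * w (p j))" using fun_sum_zero[OF s0] by simp
    also have "\<dots> = (\<Sum>w\<in>t. if w = v then u w else 0)"
    proof (intro sum.cong refl)
      fix w assume "w \<in> t"
      then obtain i where i: "i \<in> I" "w = y i" using t by blast
      have "w = v \<longleftrightarrow> i = j" using inj i j unfolding inj_on_def by blast
      then show "u w * w (p j) = (if w = v then u w else 0)" using tri i j by auto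
    qed
    also have "\<dots> = u v" using t v by (simp add: sum.delta')
    finally show False using v by simp
  qed
qed

lemma indep_map:
  fixes Y :: "('a \<Rightarrow> real) set" and T :: "('a \<Rightarrow> real) \<Rightarrow> ('b \<Rightarrow> real)"
    and G :: "('b \<Rightarrow> real) \<Rightarrow> ('a \<Rightarrow> real)"
  assumes ind: "fv.independent Y" and inv: "\<forall>y\<in>Y. G (T y) = y"
    and lin: "\<And>(t::('a \<Rightarrow> real) set) c (f::('a \<Rightarrow> real) \<Rightarrow> ('b \<Rightarrow> real)). finite t \<Longrightarrow> G (\<Sum>v\<in>t. (\<lambda>i. c v * f v i)) = (\<Sum>v\<in>t. (\<lambda>i. c v * G (f v) i))"
  shows "fv.independent (T ` Y) \<and> card (T ` Y) = card Y"
proof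
  have inj: "inj_on T Y" by (metis inj_onI inv)
  then show "card (T ` Y) = card Y" by (rule card_image)
  show "fv.independent (T ` Y)"
  proof
    assume "fv.dependent (T ` Y)"
    then obtain t u w where t: "finite t" "t \<subseteq> T ` Y" and s0: "(\<Sum>w\<in>t. (\<lambda>i. u w * w i)) = 0"
      and w: "w \<in> t" "u w \<noteq> 0"
      unfolding fv.dependent_explicit by blast
    define t' where "t' = {y \<in> Y. T y \<in> t}"
    have tt: "t = T ` t'" using t unfolding t'_def by auto
    have injt: "inj_on T t'" using inj unfolding t'_def by (auto intro: inj_on_subset)
    have ft: "finite t'" using t(1) tt injt finite_imageD by blast
    have "(\<Sum>y\<in>t'. (\<lambda>i. u (T y) * T y i)) = 0"
      using s0 unfolding tt sum.reindex[OF injt] by (simp add: comp_def)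
    then have "G (\<Sum>y\<in>t'. (\<lambda>i. u (T y) * T y i)) = G (\<Sum>y\<in>{}. (\<lambda>i. u (T y) * T y i))" by simp
    then have "(\<Sum>y\<in>t'. (\<lambda>i. u (T y) * G (T y) i)) = 0"
      using lin[OF ft, of "\<lambda>y. u (T y)" T] lin[of "{}" "\<lambda>y. u (T y)" T] by simp
    moreover have "(\<Sum>y\<in>t'. (\<lambda>i. u (T y) * y i)) = (\<Sum>y\<in>t'. (\<lambda>i. u (T y) * G (T y) i))"
      using inv unfolding t'_def by (intro sum.cong refl) auto
    ultimately have z: "(\<Sum>y\<in>t'. (\<lambda>i. u (T y) * y i)) = 0" by simp
    obtain y0 where "y0 \<in> t'" "T y0 = w" using w tt by blast
    moreover have "t' \<subseteq> Y" unfolding t'_def by auto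
    ultimately have "fv.dependent Y" unfolding fv.dependent_explicit using z ft w
      by (intro exI[of _ t'] exI[of _ "\<lambda>y. u (T y)"]) auto
    then show False using ind by simp
  qed
qed

lemma hg_finE: "hypergraph V E \<Longrightarrow> finite E"
  unfolding hypergraph_def by (meson finite_Pow_iff finite_subset)

lemma deg_sum: "finite E \<Longrightarrow> (\<Sum>e\<in>E. incidence v e) = real (hdeg E v)"
  unfolding incidence_def hdeg_def by (simp add: sum.inter_filter[symmetric])

lemma edge_sum: assumes "hypergraph V E" "uniform c E" "e \<in> E"
  shows "(\<Sum>v\<in>V. incidence v e) = real c"
proof -
  have "finite V" "e \<subseteq> V" using assms unfolding hypergraph_def by auto
  then have "(\<Sum>v\<in>V. incidence v e) = real (card {v \<in> V. v \<in> e})"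
    unfolding incidence_def by (simp add: sum.inter_filter[symmetric])
  also have "{v \<in> V. v \<in> e} = e" using \<open>e \<subseteq> V\<close> by auto
  finally show ?thesis using assms unfolding uniform_def by simp
qed

lemma sum_deg: assumes "hypergraph V E" "uniform c E"
  shows "(\<Sum>v\<in>V. real (hdeg E v)) = real c * real (card E)"
proof -
  have fE: "finite E" using hg_finE assms by blast
  have "(\<Sum>v\<in>V. real (hdeg E v)) = (\<Sum>v\<in>V. \<Sum>e\<in>E. incidence v e)" using deg_sum[OF fE] by simp
  also have "\<dots> = (\<Sum>e\<in>E. \<Sum>v\<in>V. incidence v e)" by (rule sum.swap)
  also have "\<dots> = (\<Sum>e\<in>E. real c)" using edge_sum[OF assms] by simp
  finally show ?thesis by simp
qed

lemma symm_L1: "symm E (edge_laplacian V E)"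
  unfolding symm_def edge_laplacian_def by (simp add: mult.commute)

lemma qf_formula:
  "qf E (edge_laplacian V E) x x = (\<Sum>v\<in>V. (\<Sum>e\<in>E. incidence v e * x e)^2 / real (hdeg E v))"
proof -
  have "qf E (edge_laplacian V E) x x
     = (\<Sum>e\<in>E. \<Sum>f\<in>E. \<Sum>v\<in>V. (incidence v e * x e) * (incidence v f * x f) / real (hdeg E v))"
    unfolding qf_def edge_laplacian_def
    by (simp add: sum_distrib_left sum_distrib_right algebra_simps)
  also have "\<dots> = (\<Sum>e\<in>E. \<Sum>v\<in>V. \<Sum>f\<in>E. (incidence v e * x e) * (incidence v f * x f) / real (hdeg E v))"
    by (intro sum.cong refl) (rule sum.swap)
  also have "\<dots> = (\<Sum>v\<in>V. \<Sum>e\<in>E. \<Sum>f\<in>E. (incidence v e * x e) * (incidence v f * x f) / real (hdeg E v))"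
    by (rule sum.swap)
  also have "\<dots> = (\<Sum>v\<in>V. (\<Sum>e\<in>E. incidence v e * x e)^2 / real (hdeg E v))"
    by (intro sum.cong refl) (simp add: power2_eq_square sum_product sum_divide_distrib)
  finally show ?thesis .
qed

locale hgc =
  fixes V :: "'v set" and E :: "'v set set" and c :: nat and col :: "'v set \<Rightarrow> nat" and k :: nat
  assumes hg: "hypergraph V E" and unif: "uniform c E" and M_pos: "card E \<ge> 1"
    and noiso: "\<forall>v\<in>V. hdeg E v \<ge> 1" and colok: "proper_strong_coloring E k col"
begin

lemma finE: "finite E" using hg_finE[OF hg] .
lemma finV: "finite V" using hg unfolding hypergraph_def by simp

definition MM :: real where "MM = real (card E)"
definition mm :: "nat \<Rightarrow> real" where "mm i = (\<Sum>e\<in>E. if col e = i then 1 else 0)"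
definition nn :: "nat \<Rightarrow> 'v \<Rightarrow> real" where "nn i v = (\<Sum>e\<in>E. if col e = i \<and> v \<in> e then 1 else 0)"
definition xv :: "nat \<Rightarrow> 'v set \<Rightarrow> real" where
  "xv i = (\<lambda>e. if e \<in> E then (if col e = i then 1 else 0) - mm i / MM else 0)"

lemma MM_pos: "MM > 0" unfolding MM_def using M_pos by simp

lemma d_pos: "v \<in> V \<Longrightarrow> real (hdeg E v) > 0" using noiso by force

lemma mm_card: "mm i = real (card {e \<in> E. col e = i})"
  unfolding mm_def using finE by (simp add: sum.inter_filter[symmetric])

lemma nn01: "nn i v = 0 \<or> nn i v = 1"
proof -
  have "nn i v = real (card {e \<in> E. col e = i \<and> v \<in> e})"
    unfolding nn_def using finE by (simp add: sum.inter_filter[symmetric])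
  moreover have "card {e \<in> E. col e = i \<and> v \<in> e} \<le> Suc 0"
  proof (subst card_le_Suc0_iff_eq)
    show "finite {e \<in> E. col e = i \<and> v \<in> e}" using finE by simp
    show "\<forall>a1\<in>{e \<in> E. col e = i \<and> v \<in> e}. \<forall>a2\<in>{e \<in> E. col e = i \<and> v \<in> e}. a1 = a2"
      using colok unfolding proper_strong_coloring_def by blast
  qed
  ultimately show ?thesis by (auto simp: le_Suc_eq)
qed

lemma nn_sq: "nn i v * nn i v = nn i v" using nn01[of i v] by auto

lemma Ix: "(\<Sum>e\<in>E. incidence v e * xv i e) = nn i v - mm i / MM * real (hdeg E v)"
proof -
  have "(\<Sum>e\<in>E. incidence v e * xv i e)
      = (\<Sum>e\<in>E. (if col e = i \<and> v \<in> e then 1 else 0) - mm i / MM * incidence v e)"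
    unfolding xv_def incidence_def by (intro sum.cong refl) auto
  also have "\<dots> = nn i v - mm i / MM * (\<Sum>e\<in>E. incidence v e)"
    unfolding nn_def by (simp add: sum_subtractf sum_distrib_left)
  finally show ?thesis using deg_sum[OF finE] by simp
qed

lemma sum_nn: "(\<Sum>v\<in>V. nn i v) = real c * mm i"
proof -
  have "(\<Sum>v\<in>V. nn i v) = (\<Sum>e\<in>E. \<Sum>v\<in>V. if col e = i then incidence v e else 0)"
    unfolding nn_def incidence_def by (subst sum.swap) (intro sum.cong refl, auto)
  also have "\<dots> = (\<Sum>e\<in>E. if col e = i then real c else 0)"
    using edge_sum[OF hg unif] by (intro sum.cong refl) auto
  finally show ?thesis unfolding mm_def by (simp add: sum_distrib_left if_distrib cong: if_cong)
qed

lemma col_range: "e \<in> E \<Longrightarrow> col e \<in> {1..k}"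
  using colok unfolding proper_strong_coloring_def by blast

lemma sum_nn_col: "(\<Sum>i\<in>{1..k}. nn i v) = real (hdeg E v)"
proof -
  have "(\<Sum>i\<in>{1..k}. nn i v) = (\<Sum>e\<in>E. \<Sum>i\<in>{1..k}. if col e = i \<and> v \<in> e then 1 else 0)"
    unfolding nn_def by (rule sum.swap)
  also have "\<dots> = (\<Sum>e\<in>E. incidence v e)"
  proof (intro sum.cong refl)
    fix e assume "e \<in> E"
    then have "col e \<in> {1..k}" by (rule col_range)
    then show "(\<Sum>i\<in>{1..k}. if col e = i \<and> v \<in> e then 1 else 0) = incidence v e"
      unfolding incidence_def by (simp add: sum.delta)
  qed
  finally show ?thesis using deg_sum[OF finE] by simp
qed

lemma sum_mm: "(\<Sum>i\<in>{1..k}. mm i) = MM"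
proof -
  have "(\<Sum>i\<in>{1..k}. mm i) = (\<Sum>e\<in>E. \<Sum>i\<in>{1..k}. if col e = i then 1 else 0)"
    unfolding mm_def by (rule sum.swap)
  also have "\<dots> = (\<Sum>e\<in>E. 1)"
  proof (intro sum.cong refl)
    fix e assume "e \<in> E"
    then have "col e \<in> {1..k}" by (rule col_range)
    then show "(\<Sum>i\<in>{1..k}. if col e = i then 1 else 0) = (1::real)" by (simp add: sum.delta)
  qed
  finally show ?thesis unfolding MM_def by simp
qed

lemma supp_x: "supp_in E (xv i)" unfolding supp_in_def xv_def by simp

lemma qf_x: "qf E (edge_laplacian V E) (xv i) (xv i) = (\<Sum>v\<in>V. nn i v / real (hdeg E v)) - real c * (mm i)^2 / MM"
proof -
  let ?d = "\<lambda>v. real (hdeg E v)"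
  have "qf E (edge_laplacian V E) (xv i) (xv i) = (\<Sum>v\<in>V. (nn i v - mm i / MM * ?d v)^2 / ?d v)"
    unfolding qf_formula Ix ..
  also have "\<dots> = (\<Sum>v\<in>V. nn i v / ?d v - 2 * (mm i / MM) * nn i v + (mm i / MM)^2 * ?d v)"
  proof (intro sum.cong refl)
    fix v assume "v \<in> V"
    then have dp: "?d v > 0" by (rule d_pos)
    define a where "a = mm i / MM"
    have "(nn i v - a * ?d v)^2 = nn i v * nn i v - 2 * a * nn i v * ?d v + a^2 * ?d v * ?d v"
      by (simp add: power2_eq_square algebra_simps)
    also have "\<dots> = nn i v - 2 * a * nn i v * ?d v + a^2 * ?d v * ?d v" unfolding nn_sq ..
    finally have h: "(nn i v - a * ?d v)^2 = nn i v - 2 * a * nn i v * ?d v + a^2 * ?d v * ?d v" .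
    have "(nn i v - 2 * a * nn i v * ?d v + a^2 * ?d v * ?d v) / ?d v = nn i v / ?d v - 2 * a * nn i v + a^2 * ?d v"
      using dp by (simp add: field_simps)
    then show "(nn i v - mm i / MM * ?d v)^2 / ?d v = nn i v / ?d v - 2 * (mm i / MM) * nn i v + (mm i / MM)^2 * ?d v"
      using h unfolding a_def by simp
  qed
  also have "\<dots> = (\<Sum>v\<in>V. nn i v / ?d v) - 2 * (mm i / MM) * (\<Sum>v\<in>V. nn i v) + (mm i / MM)^2 * (\<Sum>v\<in>V. ?d v)"
    by (simp add: sum.distrib sum_subtractf sum_distrib_left)
  also have "\<dots> = (\<Sum>v\<in>V. nn i v / ?d v) - real c * (mm i)^2 / MM"
    unfolding sum_nn sum_deg[OF hg unif] MM_def[symmetric] using MM_pos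
    by (simp add: field_simps power2_eq_square)
  finally show ?thesis .
qed

lemma nrm_x: "nrm E (xv i) = mm i - (mm i)^2 / MM"
proof -
  have "nrm E (xv i) = (\<Sum>e\<in>E. (if col e = i then 1 else 0) - 2 * (mm i / MM) * (if col e = i then 1 else 0) + (mm i / MM)^2)"
    unfolding nrm_def xv_def
  proof (intro sum.cong refl)
    fix e assume "e \<in> E"
    show "(if e \<in> E then (if col e = i then 1 else 0) - mm i / MM else 0)\<^sup>2 =
      (if col e = i then 1 else 0) - 2 * (mm i / MM) * (if col e = i then 1 else 0) + (mm i / MM)\<^sup>2"
    proof -
      have gen: "(b - a)^2 = b - 2*a*b + a^2" if "b = 0 \<or> b = 1" for a b :: real
        using that by (auto simp: power2_eq_square algebra_simps)
      show ?thesis using \<open>e \<in> E\<close> gen[of "if col e = i then 1 else 0" "mm i / MM"]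
        by (simp add: mult.commute)
    qed
  qed
  also have "\<dots> = mm i - 2 * (mm i / MM) * mm i + MM * (mm i / MM)^2"
  proof -
    define b where "b e = (if col e = i then 1 else (0::real))" for e
    define a where "a = mm i / MM"
    have "(\<Sum>e\<in>E. b e - 2 * a * b e + a^2) = (\<Sum>e\<in>E. b e) - (\<Sum>e\<in>E. 2 * a * b e) + (\<Sum>e\<in>E. a^2)"
      by (simp add: sum.distrib sum_subtractf)
    also have "\<dots> = mm i - 2 * a * mm i + MM * a^2"
      unfolding mm_def b_def MM_def by (simp add: sum_distrib_left[symmetric])
    finally show ?thesis unfolding a_def b_def .
  qed
  also have "\<dots> = mm i - (mm i)^2 / MM" using MM_pos by (simp add: field_simps power2_eq_square)
  finally show ?thesis .
qed

lemma sum_S: "(\<Sum>i\<in>{1..k}. \<Sum>v\<in>V. nn i v / real (hdeg E v)) = real (card V)"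
proof -
  have "(\<Sum>i\<in>{1..k}. \<Sum>v\<in>V. nn i v / real (hdeg E v)) = (\<Sum>v\<in>V. (\<Sum>i\<in>{1..k}. nn i v) / real (hdeg E v))"
    by (subst sum.swap) (simp add: sum_divide_distrib)
  also have "\<dots> = (\<Sum>v\<in>V. 1)"
  proof (intro sum.cong refl)
    fix v assume "v \<in> V"
    show "(\<Sum>i\<in>{1..k}. nn i v) / real (hdeg E v) = 1" using sum_nn_col[of v] d_pos[OF \<open>v \<in> V\<close>] by simp
  qed
  finally show ?thesis by simp
qed

end

definition Tm :: "'v set \<Rightarrow> 'v set set \<Rightarrow> ('v set \<Rightarrow> real) \<Rightarrow> 'v \<Rightarrow> real" where
  "Tm V E y = (\<lambda>v. if v \<in> V then (\<Sum>e\<in>E. incidence v e * y e) / real (hdeg E v) else 0)"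

definition Gm :: "'v set \<Rightarrow> 'v set set \<Rightarrow> real \<Rightarrow> ('v \<Rightarrow> real) \<Rightarrow> 'v set \<Rightarrow> real" where
  "Gm V E \<mu> z = (\<lambda>e. if e \<in> E then (\<Sum>w\<in>V. incidence w e * z w) / \<mu> else 0)"

lemma inc_Tm: "(\<Sum>w\<in>V. incidence w e * Tm V E y w) = (\<Sum>f\<in>E. edge_laplacian V E e f * y f)"
proof -
  have "(\<Sum>w\<in>V. incidence w e * Tm V E y w)
      = (\<Sum>w\<in>V. \<Sum>f\<in>E. incidence w e * incidence w f / real (hdeg E w) * y f)"
    unfolding Tm_def by (intro sum.cong refl) (simp add: sum_distrib_left sum_divide_distrib algebra_simps)
  also have "\<dots> = (\<Sum>f\<in>E. \<Sum>w\<in>V. incidence w e * incidence w f / real (hdeg E w) * y f)"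
    by (rule sum.swap)
  also have "\<dots> = (\<Sum>f\<in>E. edge_laplacian V E e f * y f)"
    unfolding edge_laplacian_def by (simp add: sum_distrib_right)
  finally show ?thesis .
qed

lemma Tm_eig: assumes y: "y \<in> eigenspace E (edge_laplacian V E) \<mu>"
  shows "Tm V E y \<in> eigenspace V (norm_laplacian V E) \<mu>"
  unfolding eigenspace_def
proof (intro CollectI conjI allI impI ballI)
  fix v assume "v \<notin> V" then show "Tm V E y v = 0" unfolding Tm_def by simp
next
  fix v assume v: "v \<in> V"
  have "(\<Sum>w\<in>V. norm_laplacian V E v w * Tm V E y w)
      = (\<Sum>w\<in>V. \<Sum>e\<in>E. incidence v e * (incidence w e * Tm V E y w) / real (hdeg E v))"
    unfolding norm_laplacian_def
  proof (intro sum.cong refl)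
    fix w
    show "(\<Sum>e\<in>E. incidence v e * incidence w e) / real (hdeg E v) * Tm V E y w =
          (\<Sum>e\<in>E. incidence v e * (incidence w e * Tm V E y w) / real (hdeg E v))"
      by (simp add: sum_divide_distrib sum_distrib_right mult.assoc)
  qed
  also have "\<dots> = (\<Sum>e\<in>E. \<Sum>w\<in>V. incidence v e * (incidence w e * Tm V E y w) / real (hdeg E v))"
    by (rule sum.swap)
  also have "\<dots> = (\<Sum>e\<in>E. incidence v e * (\<Sum>w\<in>V. incidence w e * Tm V E y w) / real (hdeg E v))"
    by (simp add: sum_distrib_left sum_divide_distrib)
  also have "\<dots> = (\<Sum>e\<in>E. incidence v e * (\<mu> * y e) / real (hdeg E v))"
    unfolding inc_Tm using y unfolding eigenspace_def by (intro sum.cong refl) auto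
  also have "\<dots> = \<mu> * Tm V E y v"
    unfolding Tm_def using v by (simp add: sum_distrib_left sum_divide_distrib algebra_simps)
  finally show "(\<Sum>w\<in>V. norm_laplacian V E v w * Tm V E y w) = \<mu> * Tm V E y v" .
qed

lemma GT: assumes y: "y \<in> eigenspace E (edge_laplacian V E) \<mu>" and mu: "\<mu> \<noteq> 0"
  shows "Gm V E \<mu> (Tm V E y) = y"
proof (rule ext)
  fix e
  show "Gm V E \<mu> (Tm V E y) e = y e"
  proof (cases "e \<in> E")
    case True
    then have "(\<Sum>f\<in>E. edge_laplacian V E e f * y f) = \<mu> * y e" using y unfolding eigenspace_def by auto
    then show ?thesis unfolding Gm_def inc_Tm using True mu by simp
  next
    case False then show ?thesis using y unfolding Gm_def eigenspace_def by auto
  qed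
qed

lemma Gm_lin: "Gm V E \<mu> (\<Sum>v\<in>t. (\<lambda>i. c v * f v i)) = (\<Sum>v\<in>t. (\<lambda>i. c v * Gm V E \<mu> (f v) i))"
proof (rule ext)
  fix e
  show "Gm V E \<mu> (\<Sum>v\<in>t. (\<lambda>i. c v * f v i)) e = (\<Sum>v\<in>t. (\<lambda>i. c v * Gm V E \<mu> (f v) i)) e"
    unfolding Gm_def sum_fun_app
    by (simp add: sum_distrib_left sum_divide_distrib algebra_simps sum.swap[of _ t])
qed

lemma eig_diff: "x \<in> eigenspace S A \<mu> \<Longrightarrow> y \<in> eigenspace S A \<mu> \<Longrightarrow> (\<lambda>i. x i - y i) \<in> eigenspace S A \<mu>"
  unfolding eigenspace_def by (auto simp: sum_subtractf right_diff_distrib algebra_simps)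

theorem mainTheorem16:
  fixes V :: "'v set" and E :: "'v set set" and c :: nat
  assumes hg: "hypergraph V E"
    and c_pos: "c \<ge> 1"
    and unif: "uniform c E"
    and M_pos: "card E \<ge> 1"
    and no_isolated: "\<forall>v\<in>V. hdeg E v \<ge> 1"
    and mu1_lt: "mu1 V E < real c / avg_deg V E"
    and chi_eq: "real (strong_chromatic_index E)
                   = (real c - mu1 V E) / (real c / avg_deg V E - mu1 V E)"
  shows "(mu1 V E = 0 \<longrightarrow>
            (\<exists>k::nat. regular V E k \<and> real k = avg_deg V E
               \<and> strong_chromatic_index E = k
               \<and> is_eigenvalue E (edge_laplacian V E) 0
               \<and> eig_mult E (edge_laplacian V E) 0 \<ge> k - 1))
       \<and> (mu1 V E > 0 \<longrightarrow>
            is_eigenvalue E (edge_laplacian V E) (mu1 V E)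
            \<and> eig_mult E (edge_laplacian V E) (mu1 V E) \<ge> strong_chromatic_index E - 1
            \<and> is_eigenvalue V (norm_laplacian V E) (mu1 V E)
            \<and> eig_mult V (norm_laplacian V E) (mu1 V E) \<ge> strong_chromatic_index E - 1)"
proof -
  let ?A = "edge_laplacian V E"
  have fE: "finite E" using hg_finE[OF hg] .
  have fV: "finite V" using hg unfolding hypergraph_def by simp
  have Ene: "E \<noteq> {}" using M_pos by auto
  obtain lam x0 where x0: "x0 \<in> eigenspace E ?A lam" "x0 \<noteq> (\<lambda>_. 0)"
    and rayl: "\<forall>y. supp_in E y \<longrightarrow> lam * nrm E y \<le> qf E ?A y y"
    using rayleigh[OF fE Ene symm_L1] by blast
  have mu_eq: "mu1 V E = lam" unfolding mu1_def
  proof (rule Min_eqI[OF eig_finite[OF fE symm_L1]])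
    show "lam \<in> {\<mu>. is_eigenvalue E ?A \<mu>}" using x0 unfolding is_eigenvalue_def by blast
  next
    fix \<mu> assume "\<mu> \<in> {\<mu>. is_eigenvalue E ?A \<mu>}"
    then obtain y where y: "y \<in> eigenspace E ?A \<mu>" "y \<noteq> (\<lambda>_. 0)" unfolding is_eigenvalue_def by blast
    have sy: "supp_in E y" using eig_supp[OF y(1)] .
    have "lam * nrm E y \<le> \<mu> * nrm E y" using rayl[rule_format, OF sy] qf_eig[OF y(1)] by simp
    moreover have "nrm E y > 0" using nrm_pos[OF fE sy y(2)] .
    ultimately show "lam \<le> \<mu>" by simp
  qed
  define \<mu> where "\<mu> = mu1 V E"
  have ray: "\<forall>y. supp_in E y \<longrightarrow> \<mu> * nrm E y \<le> qf E ?A y y" using rayl mu_eq \<mu>_def by simp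
  have mu_eig: "is_eigenvalue E ?A \<mu>" using x0 mu_eq \<mu>_def unfolding is_eigenvalue_def by blast
  define chi where "chi = strong_chromatic_index E"
  have excol: "\<exists>k col. proper_strong_coloring E k col"
  proof -
    obtain h where h: "bij_betw h E {0..<card E}" using ex_bij_betw_finite_nat[OF fE] by blast
    have "proper_strong_coloring E (card E) (\<lambda>e. h e + 1)"
      unfolding proper_strong_coloring_def
    proof (intro conjI ballI impI)
      fix e assume "e \<in> E"
      then have "h e \<in> {0..<card E}" using h unfolding bij_betw_def by blast
      then show "h e + 1 \<in> {1..card E}" by simp
    next
      fix e f assume "e \<in> E" "f \<in> E" "e \<noteq> f \<and> h e + 1 = h f + 1"
      then show "e \<inter> f = {}" using h unfolding bij_betw_def inj_on_def by auto
    qed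
    then show ?thesis by blast
  qed
  then have "\<exists>col. proper_strong_coloring E chi col"
    unfolding chi_def strong_chromatic_index_def by (rule LeastI_ex[of "\<lambda>k. \<exists>col. proper_strong_coloring E k col"])
  then obtain col where colok: "proper_strong_coloring E chi col" by blast
  interpret H: hgc V E c col chi
    using hg unif M_pos no_isolated colok by unfold_locales auto
  have chi1: "chi \<ge> 1"
  proof (rule ccontr)
    assume "\<not> chi \<ge> 1" then have "chi = 0" by simp
    obtain e where "e \<in> E" using Ene by blast
    then show False using H.col_range[of e] \<open>chi = 0\<close> by simp
  qed

  define N where "N = real (card V)"
  define M where "M = H.MM"
  have Mpos: "M > 0" unfolding M_def using H.MM_pos .
  obtain e0 where e0: "e0 \<in> E" using Ene by blast
  have "card e0 = c" using unif e0 unfolding uniform_def by simp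
  then have "e0 \<noteq> {}" using c_pos by auto
  moreover have "e0 \<subseteq> V" using hg e0 unfolding hypergraph_def by auto
  ultimately have "V \<noteq> {}" by auto
  then have Npos: "N > 0" unfolding N_def using fV by (simp add: card_gt_0_iff)
  have sumd: "(\<Sum>v\<in>V. real (hdeg E v)) = real c * M"
    using sum_deg[OF hg unif] unfolding M_def H.MM_def .
  have avg: "avg_deg V E = real c * M / N" unfolding avg_deg_def sumd N_def ..
  have cpos: "real c > 0" using c_pos by simp
  have cavg: "real c / avg_deg V E = N / M" unfolding avg using cpos Mpos Npos by (simp add: field_simps)
  have den: "N / M - \<mu> > 0" using mu1_lt unfolding cavg \<mu>_def by simp
  have key: "real chi * (N / M - \<mu>) = real c - \<mu>"
    using chi_eq den unfolding cavg chi_def[symmetric] \<mu>_def[symmetric] by (simp add: field_simps)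
  have chipos: "real chi > 0" using chi1 by simp
  have cmu: "real c - \<mu> > 0" using key chipos den by (metis mult_pos_pos)
  have key2: "N - \<mu> * M = (real c - \<mu>) * M / real chi"
  proof -
    have "real chi * (N - \<mu> * M) = real chi * (N / M - \<mu>) * M" using Mpos by (simp add: field_simps)
    also have "\<dots> = (real c - \<mu>) * M" using key by simp
    finally show ?thesis using chipos by (simp add: field_simps)
  qed
  define g where "g i = qf E ?A (H.xv i) (H.xv i) - \<mu> * nrm E (H.xv i)" for i
  have g_nn: "0 \<le> g i" for i unfolding g_def using ray H.supp_x by simp
  define Q where "Q = (\<Sum>i\<in>{1..chi}. (H.mm i)^2)"
  have sum_qf: "(\<Sum>i\<in>{1..chi}. qf E ?A (H.xv i) (H.xv i)) = N - real c * Q / M"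
    unfolding H.qf_x sum_subtractf H.sum_S N_def[symmetric] Q_def M_def
    by (simp add: sum_divide_distrib[symmetric] sum_distrib_left[symmetric])
  have sum_nrm: "(\<Sum>i\<in>{1..chi}. nrm E (H.xv i)) = M - Q / M"
    unfolding H.nrm_x sum_subtractf H.sum_mm Q_def M_def
    by (simp add: sum_divide_distrib[symmetric])
  have sum_g: "(\<Sum>i\<in>{1..chi}. g i) = (real c - \<mu>) * (M / real chi - Q / M)"
  proof -
    have "(\<Sum>i\<in>{1..chi}. g i) = (N - real c * Q / M) - \<mu> * (M - Q / M)"
      unfolding g_def sum_subtractf sum_qf sum_distrib_left[symmetric] sum_nrm ..
    also have "\<dots> = (N - \<mu> * M) - (real c - \<mu>) * Q / M" using Mpos by (simp add: field_simps)
    also have "\<dots> = (real c - \<mu>) * (M / real chi - Q / M)" unfolding key2 using Mpos chipos by (simp add: field_simps)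
    finally show ?thesis .
  qed
  have var: "(\<Sum>i\<in>{1..chi}. (H.mm i - M / real chi)^2) = Q - M^2 / real chi"
  proof -
    have "(\<Sum>i\<in>{1..chi}. (H.mm i - M / real chi)^2)
        = (\<Sum>i\<in>{1..chi}. (H.mm i)^2) - 2 * (M / real chi) * (\<Sum>i\<in>{1..chi}. H.mm i) + real chi * (M / real chi)^2"
    proof -
      define a where "a = M / real chi"
      have "(\<Sum>i\<in>{1..chi}. (H.mm i - a)^2) = (\<Sum>i\<in>{1..chi}. (H.mm i)^2 - 2 * a * H.mm i + a^2)"
        by (intro sum.cong refl) (simp add: power2_eq_square algebra_simps)
      also have "\<dots> = (\<Sum>i\<in>{1..chi}. (H.mm i)^2) - (\<Sum>i\<in>{1..chi}. 2 * a * H.mm i) + (\<Sum>i\<in>{1..chi}. a^2)"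
        by (simp add: sum.distrib sum_subtractf)
      also have "\<dots> = (\<Sum>i\<in>{1..chi}. (H.mm i)^2) - 2 * a * (\<Sum>i\<in>{1..chi}. H.mm i) + real chi * a^2"
        by (simp add: sum_distrib_left)
      finally show ?thesis unfolding a_def .
    qed
    also have "\<dots> = Q - M^2 / real chi" unfolding Q_def H.sum_mm M_def[symmetric] using chipos
      by (simp add: power2_eq_square field_simps)
    finally show ?thesis .
  qed
  have Qge: "Q \<ge> M^2 / real chi"
    using var sum_nonneg[of "{1..chi}" "\<lambda>i. (H.mm i - M / real chi)^2"] by simp
  have "Q / M \<ge> M / real chi"
  proof -
    have "M / real chi = (M^2 / real chi) / M" using Mpos by (simp add: power2_eq_square)
    also have "\<dots> \<le> Q / M" using divide_right_mono[OF Qge, of M] Mpos by simp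
    finally show ?thesis .
  qed
  then have "(\<Sum>i\<in>{1..chi}. g i) \<le> 0" unfolding sum_g using cmu
    by (simp add: mult_nonneg_nonpos)
  moreover have "0 \<le> (\<Sum>i\<in>{1..chi}. g i)" by (rule sum_nonneg) (rule g_nn)
  ultimately have sg0: "(\<Sum>i\<in>{1..chi}. g i) = 0" by linarith
  have g0: "g i = 0" if "i \<in> {1..chi}" for i
  proof -
    have "\<forall>i\<in>{1..chi}. g i = 0" using sum_nonneg_eq_0_iff[of "{1..chi}" g] g_nn sg0 by blast
    then show ?thesis using that by blast
  qed
  have "M / real chi - Q / M = 0" using sg0 cmu unfolding sum_g by simp
  then have "Q = M^2 / real chi" using Mpos by (simp add: field_simps power2_eq_square)
  then have "(\<Sum>i\<in>{1..chi}. (H.mm i - M / real chi)^2) = 0" unfolding var by simp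
  then have mm_eq: "H.mm i = M / real chi" if "i \<in> {1..chi}" for i
    using sum_nonneg_eq_0_iff[of "{1..chi}" "\<lambda>i. (H.mm i - M / real chi)^2"] that by simp
  have xeig: "H.xv i \<in> eigenspace E ?A \<mu>" if "i \<in> {1..chi}" for i
    using psd_eig[OF fE symm_L1 ray H.supp_x] g0[OF that] unfolding g_def by simp
  have exrep: "\<exists>e. e \<in> E \<and> col e = i" if "i \<in> {1..chi}" for i
  proof -
    have "real (card {e \<in> E. col e = i}) > 0" using mm_eq[OF that] Mpos chipos H.mm_card[of i] by simp
    then have "{e \<in> E. col e = i} \<noteq> {}" by (metis card.empty of_nat_0 less_irrefl)
    then show ?thesis by blast
  qed
  define p where "p i = (SOME e. e \<in> E \<and> col e = i)" for i
  have p: "p i \<in> E" "col (p i) = i" if "i \<in> {1..chi}" for i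
    using someI_ex[OF exrep[OF that]] unfolding p_def by blast+
  define y where "y i = (\<lambda>e. H.xv i e - H.xv chi e)" for i
  have chiin: "chi \<in> {1..chi}" using chi1 by simp
  have tri: "\<forall>i\<in>{1..<chi}. \<forall>j\<in>{1..<chi}. y i (p j) = (if i = j then 1 else 0)"
  proof (intro ballI)
    fix i j assume i: "i \<in> {1..<chi}" and j: "j \<in> {1..<chi}"
    then have i': "i \<in> {1..chi}" and j': "j \<in> {1..chi}" by auto
    have "j \<noteq> chi" using j by simp
    then show "y i (p j) = (if i = j then 1 else 0)"
      unfolding y_def H.xv_def using p[OF j'] mm_eq[OF i'] mm_eq[OF chiin] by auto
  qed
  define Y where "Y = y ` {1..<chi}"
  have indY: "fv.independent Y" and cardY: "card Y = chi - 1"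
    using indep_tri[of "{1..<chi}" y p, OF finite_atLeastLessThan tri] unfolding Y_def by auto
  have Ysub: "Y \<subseteq> eigenspace E ?A \<mu>"
    unfolding Y_def y_def using xeig chiin by (auto intro!: eig_diff)
  have multA: "chi - 1 \<le> eig_mult E ?A \<mu>" using dim_lower[OF fE Ysub indY] cardY by simp
  show ?thesis
  proof (intro conjI impI)
    assume mu0: "mu1 V E = 0"
    then have mu0': "\<mu> = 0" unfolding \<mu>_def .
    have reg: "regular V E chi" unfolding regular_def
    proof
      fix v assume v: "v \<in> V"
      have "qf E ?A (H.xv 1) (H.xv 1) = 0" using g0[of 1] chi1 mu0' unfolding g_def by simp
      define f where "f w = (\<Sum>e\<in>E. incidence w e * H.xv 1 e)^2 / real (hdeg E w)" for w
      have fs: "(\<Sum>w\<in>V. f w) = 0" unfolding f_def qf_formula[symmetric] by fact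
      have fnn: "\<forall>w\<in>V. 0 \<le> f w" unfolding f_def by simp
      have "\<forall>w\<in>V. f w = 0" using sum_nonneg_eq_0_iff[OF fV, of f] fnn fs by simp
      then have "f v = 0" using v by blast
      then have "(\<Sum>e\<in>E. incidence v e * H.xv 1 e)^2 / real (hdeg E v) = 0" unfolding f_def .
      then have "H.nn 1 v - H.mm 1 / H.MM * real (hdeg E v) = 0"
        using H.d_pos[OF v] unfolding H.Ix by simp
      then have e1: "H.nn 1 v = H.mm 1 / H.MM * real (hdeg E v)" by linarith
      have e2: "H.mm 1 / H.MM = 1 / real chi" using mm_eq[of 1] chi1 Mpos unfolding M_def by simp
      have nn: "H.nn 1 v = real (hdeg E v) / real chi" unfolding e1 e2 by simp
      have dv: "real (hdeg E v) \<ge> 1" using no_isolated v by simp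
      show "hdeg E v = chi"
      proof (cases "H.nn 1 v = 0")
        case True then show ?thesis using nn dv chipos by simp
      next
        case False then have "H.nn 1 v = 1" using H.nn01 by blast
        then show ?thesis using nn chipos by (simp add: field_simps)
      qed
    qed
    have "avg_deg V E = real chi"
    proof -
      have "(\<Sum>v\<in>V. real (hdeg E v)) = (\<Sum>v\<in>V. real chi)" using reg unfolding regular_def by simp
      then show ?thesis unfolding avg_deg_def using Npos unfolding N_def by simp
    qed
    then show "\<exists>k::nat. regular V E k \<and> real k = avg_deg V E
               \<and> strong_chromatic_index E = k
               \<and> is_eigenvalue E (edge_laplacian V E) 0
               \<and> eig_mult E (edge_laplacian V E) 0 \<ge> k - 1"
      using reg mu_eig multA mu0' chi_def by (intro exI[of _ chi]) auto
  next
    assume mup: "mu1 V E > 0"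
    then have mup': "\<mu> > 0" unfolding \<mu>_def .
    show "is_eigenvalue E ?A (mu1 V E)" using mu_eig \<mu>_def by simp
    show "eig_mult E ?A (mu1 V E) \<ge> strong_chromatic_index E - 1" using multA \<mu>_def chi_def by simp
    obtain x1 where x1: "x1 \<in> eigenspace E ?A \<mu>" "x1 \<noteq> (\<lambda>_. 0)" using mu_eig unfolding is_eigenvalue_def by blast
    have "Tm V E x1 \<noteq> (\<lambda>_. 0)"
    proof
      assume "Tm V E x1 = (\<lambda>_. 0)"
      then have "Gm V E \<mu> (Tm V E x1) = (\<lambda>_. 0)" unfolding Gm_def by (simp add: fun_eq_iff)
      then show False using GT[OF x1(1)] mup' x1(2) by simp
    qed
    then show "is_eigenvalue V (norm_laplacian V E) (mu1 V E)"
      using Tm_eig[OF x1(1)] unfolding is_eigenvalue_def \<mu>_def by blast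
    have inv: "\<forall>y\<in>Y. Gm V E \<mu> (Tm V E y) = y"
    proof
      fix y assume "y \<in> Y"
      then have "y \<in> eigenspace E ?A \<mu>" using Ysub by blast
      moreover have "\<mu> \<noteq> 0" using mup' by simp
      ultimately show "Gm V E \<mu> (Tm V E y) = y" by (rule GT)
    qed
    have TY: "fv.independent (Tm V E ` Y) \<and> card (Tm V E ` Y) = card Y"
      by (rule indep_map[of Y "Gm V E \<mu>" "Tm V E", OF indY inv]) (rule Gm_lin)
    have TYs: "Tm V E ` Y \<subseteq> eigenspace V (norm_laplacian V E) \<mu>"
    proof
      fix z assume "z \<in> Tm V E ` Y"
      then obtain y where "y \<in> Y" "z = Tm V E y" by blast
      then show "z \<in> eigenspace V (norm_laplacian V E) \<mu>" using Ysub Tm_eig by blast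
    qed
    have "card (Tm V E ` Y) \<le> eig_mult V (norm_laplacian V E) \<mu>"
      using dim_lower[OF fV TYs] TY by blast
    then have "card Y \<le> eig_mult V (norm_laplacian V E) \<mu>" using TY by simp
    then show "eig_mult V (norm_laplacian V E) (mu1 V E) \<ge> strong_chromatic_index E - 1"
      using cardY \<mu>_def chi_def by simp
  qed
qed

end
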